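(* Let $\alpha_u,\alpha_f,\alpha_{g_n},\alpha_{h_n}$ ($n\ge1$) be mutually independent Nakagami-$m$ random variables, with all $\alpha_{g_n}$ having parameters $(m_g,\Omega_g)$ and all $\alpha_{h_n}$ having parameters $(m_h,\Omega_h)$, and let $\eta_n=\eta\in(0,1]$. For each $N$ let $\Lambda_N=\alpha_u\big(\alpha_f+\sum_{n=1}^N\eta\alpha_{g_n}\alpha_{h_n}\big)$ and $k_{\Lambda_N}=(\mathbb{E}\{\Lambda_N\})^2/\mathrm{Var}\{\Lambda_N\}$, and let $G_d(N)=k_{\Lambda_N}/2$. Then $$\lim_{N\to\infty}G_d(N)=\frac12\left(m_u\left(\frac{\Gamma(m_u)}{\Gamma(m_u+\frac12)}\right)^2-1\right)^{-1},$$ which depends only on the shape parameter $m_u$ of $\alpha_u$.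
   Context: A Nakagami-$m$ random variable $\alpha_a$ with shape $m_a\ge 1/2$ and scale $\Omega_a>0$ has density $f_{\alpha_a}(x)=\frac{2m_a^{m_a}x^{2m_a-1}}{\Gamma(m_a)\Omega_a^{m_a}}\exp(-m_ax^2/\Omega_a)$, $x\ge0$. $G_d=k_\Lambda/2$ is the diversity order of the Gamma-approximated SNR $\bar\gamma\Lambda^2$. *)

theory Defs
  imports "HOL-Probability.Probability"
begin

definition nakagami_density :: "real \<Rightarrow> real \<Rightarrow> real \<Rightarrow> real" where
  "nakagami_density m \<Omega> x =
     (if x \<ge> 0 then 2 * m powr m * x powr (2 * m - 1) / (Gamma m * \<Omega> powr m)
                    * exp (- m * x\<^sup>2 / \<Omega>) else 0)"

definition nakagami :: "real \<Rightarrow> real \<Rightarrow> 'a measure \<Rightarrow> ('a \<Rightarrow> real) \<Rightarrow> bool" where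
  "nakagami m \<Omega> M X \<longleftrightarrow> distributed M lborel X (\<lambda>x. ennreal (nakagami_density m \<Omega> x))"

text \<open>Index set of the random variables: alpha_u, alpha_f, alpha_{g_n}, alpha_{h_n}.\<close>
datatype rv_idx = U | Fi | Gi nat | Hi nat

definition Lambda :: "(rv_idx \<Rightarrow> 'a \<Rightarrow> real) \<Rightarrow> real \<Rightarrow> nat \<Rightarrow> 'a \<Rightarrow> real" where
  "Lambda X \<eta> N \<omega> = X U \<omega> * (X Fi \<omega> + (\<Sum>n\<in>{1..N}. \<eta> * X (Gi n) \<omega> * X (Hi n) \<omega>))"

definition k_Lambda :: "'a measure \<Rightarrow> (rv_idx \<Rightarrow> 'a \<Rightarrow> real) \<Rightarrow> real \<Rightarrow> nat \<Rightarrow> real" where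
  "k_Lambda M X \<eta> N = (prob_space.expectation M (Lambda X \<eta> N))\<^sup>2
                        / prob_space.variance M (Lambda X \<eta> N)"

definition G_d :: "'a measure \<Rightarrow> (rv_idx \<Rightarrow> 'a \<Rightarrow> real) \<Rightarrow> real \<Rightarrow> nat \<Rightarrow> real" where
  "G_d M X \<eta> N = k_Lambda M X \<eta> N / 2"

end

theory Submission
  imports Defs
begin

lemma nak_density_nonneg: "m > 0 \<Longrightarrow> \<Omega> > 0 \<Longrightarrow> 0 \<le> nakagami_density m \<Omega> x"
  unfolding nakagami_density_def by (auto intro!: mult_nonneg_nonneg divide_nonneg_pos Gamma_real_pos)

lemma nak_density_meas[measurable]: "nakagami_density m \<Omega> \<in> borel_measurable borel"
  unfolding nakagami_density_def by measurable

lemma nak_density_zero: "x \<le> 0 \<Longrightarrow> nakagami_density m \<Omega> x = 0"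
  unfolding nakagami_density_def by auto

lemma Gamma_has_integral_pos:
  assumes "a > (0::real)"
  shows "((\<lambda>t. t powr (a - 1) / exp t) has_integral Gamma a) {0<..}"
proof -
  have "((\<lambda>t. t powr (a - 1) / exp t) has_integral Gamma a) {0..}"
    by (rule Gamma_integral_real) fact
  hence "((\<lambda>t. if t \<in> {0<..} then t powr (a - 1) / exp t else 0) has_integral Gamma a) {0..}"
    by (rule has_integral_spike [of "{0}", rotated 2]) auto
  also have "?this = ?thesis"
    by (subst has_integral_restrict) auto
  finally show ?thesis .
qed

lemma aux_alg1: "(w::real) \<noteq> 0 \<Longrightarrow> G \<noteq> 0 \<Longrightarrow> 2 * (b * w) * X / (G * w) * inverse E = 2 * b * X / G / E"
  by (simp add: field_simps)

lemma aux_alg2: "(G::real) \<noteq> 0 \<Longrightarrow> G * p * (2 * b * X / G / E * Y) = 2 * (p * b) * (X * Y) / E"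
  by (simp add: field_simps)

lemma aux_alg3: "q * p = 1 \<Longrightarrow> inverse ((G::real) * q) = p / G"
proof -
  assume "q * p = 1"
  hence "p = inverse q" by (metis inverse_unique)
  thus ?thesis by (simp add: inverse_mult_distrib divide_inverse mult.commute)
qed

lemma nak_moment:
  fixes k :: nat
  assumes m: "m > 0" and Om: "\<Omega> > 0"
  shows "has_bochner_integral lborel (\<lambda>x. nakagami_density m \<Omega> x * x ^ k)
           (Gamma (m + real k / 2) / Gamma m * (\<Omega> / m) powr (real k / 2))"
proof -
  define c where "c = m / \<Omega>"
  define a where "a = m + real k / 2"
  have c: "c > 0" using m Om by (simp add: c_def)
  have a: "a > 0" using m by (simp add: a_def)
  let ?f = "\<lambda>t::real. t powr (a - 1) / exp t"
  let ?g = "\<lambda>x::real. c * x\<^sup>2"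
  have Gint: "(?f has_integral Gamma a) {0<..}" by (rule Gamma_has_integral_pos[OF a])
  have Gabs: "?f absolutely_integrable_on {0<..}"
    by (rule nonnegative_absolutely_integrable_1) (use Gint in auto)
  have img: "?g ` {0<..} = {0<..}"
  proof
    show "?g ` {0<..} \<subseteq> {0<..}" using c by auto
    show "{0<..} \<subseteq> ?g ` {0<..}"
    proof
      fix y :: real assume y: "y \<in> {0<..}"
      have "?g (sqrt (y / c)) = y" using y c by (simp add: power2_eq_square)
      moreover have "sqrt (y/c) \<in> {0<..}" using y c by simp
      ultimately show "y \<in> ?g ` {0<..}" by (metis image_eqI)
    qed
  qed
  have inj: "inj_on ?g {0<..}"
    using c by (auto simp: inj_on_def power2_eq_iff_nonneg)
  have der: "\<And>x. x \<in> {0<..} \<Longrightarrow> (?g has_field_derivative 2 * c * x) (at x within {0<..})"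
    by (auto intro!: derivative_eq_intros)
  have CV: "(\<lambda>x. \<bar>2 * c * x\<bar> * ?f (?g x)) absolutely_integrable_on {0<..} \<and>
      integral {0<..} (\<lambda>x. \<bar>2 * c * x\<bar> * ?f (?g x)) = Gamma a"
    apply (rule has_absolute_integral_change_of_variables_1'[OF _ der inj, THEN iffD2])
    using Gabs Gint img by (auto simp: integral_unique)
  have gm0: "Gamma m \<noteq> 0" using Gamma_real_pos[OF m] by simp
  define C where "C = Gamma m * c powr (real k / 2)"
  have C: "C > 0" using m c by (simp add: C_def Gamma_real_pos)
  have eq: "\<bar>2 * c * x\<bar> * ?f (?g x) = C * (nakagami_density m \<Omega> x * x ^ k)" if x: "x > 0" for x
  proof -
    have e1: "exp (- m * x\<^sup>2 / \<Omega>) = inverse (exp (?g x))"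
      by (simp add: c_def exp_minus)
    have e2: "m powr m / \<Omega> powr m = c powr m" using m Om by (simp add: c_def powr_divide)
    have e3: "(c * x\<^sup>2) powr (a - 1) = c powr (a - 1) * x powr (2 * a - 2)"
      using c x by (simp add: powr_mult powr_powr algebra_simps flip: powr_numeral)
    have e4: "x ^ k = x powr real k" using x by (simp add: powr_realpow)
    have "\<bar>2 * c * x\<bar> * ?f (?g x) = 2 * (c * c powr (a - 1)) * (x * x powr (2 * a - 2)) / exp (?g x)"
      using c x e3 by simp
    also have "\<dots> = 2 * c powr a * x powr (2 * a - 1) / exp (?g x)"
      using c x by (simp add: powr_mult_base)
    finally have lhs: "\<bar>2 * c * x\<bar> * ?f (?g x) = 2 * c powr a * x powr (2 * a - 1) / exp (?g x)" .
    have nd: "nakagami_density m \<Omega> x = 2 * c powr m * x powr (2 * m - 1) / Gamma m / exp (?g x)"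
    proof -
      have mm: "m powr m = c powr m * \<Omega> powr m" using m Om by (simp add: c_def powr_divide)
      have op: "\<Omega> powr m > 0" using Om by simp
      have "nakagami_density m \<Omega> x = 2 * (c powr m * \<Omega> powr m) * x powr (2 * m - 1) / (Gamma m * \<Omega> powr m) * inverse (exp (?g x))"
        unfolding nakagami_density_def using x e1 mm by simp
      also have "\<dots> = 2 * c powr m * x powr (2 * m - 1) / Gamma m / exp (?g x)"
        using op gm0 by (intro aux_alg1) auto
      finally show ?thesis .
    qed
    have "C * (nakagami_density m \<Omega> x * x ^ k) =
        2 * (c powr (real k / 2) * c powr m) * (x powr (2 * m - 1) * x powr real k) / exp (?g x)"
      unfolding nd C_def e4 using gm0 by (rule aux_alg2)
    also have "\<dots> = 2 * c powr a * x powr (2 * a - 1) / exp (?g x)"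
    proof -
      have p1: "c powr (real k / 2) * c powr m = c powr a" by (simp add: a_def powr_add[symmetric] add.commute)
      have p2: "x powr (2 * m - 1) * x powr real k = x powr (2 * a - 1)"
        unfolding powr_add[symmetric] by (rule arg_cong[where f="\<lambda>e. x powr e"]) (simp add: a_def)
      show ?thesis by (simp only: p1 p2)
    qed
    finally have rhs: "C * (nakagami_density m \<Omega> x * x ^ k) = 2 * c powr a * x powr (2 * a - 1) / exp (?g x)" .
    show ?thesis by (simp only: lhs rhs)
  qed
  have "(\<lambda>x. \<bar>2 * c * x\<bar> * ?f (?g x)) integrable_on {0<..}"
    using CV set_lebesgue_integral_eq_integral(1) by blast
  hence "((\<lambda>x. \<bar>2 * c * x\<bar> * ?f (?g x)) has_integral integral {0<..} (\<lambda>x. \<bar>2 * c * x\<bar> * ?f (?g x))) {0<..}"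
    using has_integral_integral by blast
  hence "((\<lambda>x. \<bar>2 * c * x\<bar> * ?f (?g x)) has_integral Gamma a) {0<..}"
    using CV by simp
  hence "((\<lambda>x. inverse C * (\<bar>2 * c * x\<bar> * ?f (?g x))) has_integral inverse C * Gamma a) {0<..}"
    by (rule has_integral_mult_right)
  hence h1: "((\<lambda>x. nakagami_density m \<Omega> x * x ^ k) has_integral inverse C * Gamma a) {0<..}"
    by (rule has_integral_eq[rotated]) (use eq C in auto)
  have "(\<lambda>x. if x \<in> {0<..} then nakagami_density m \<Omega> x * x ^ k else 0) = (\<lambda>x. nakagami_density m \<Omega> x * x ^ k)"
    by (auto simp: nak_density_zero)
  with h1 have h2: "((\<lambda>x. nakagami_density m \<Omega> x * x ^ k) has_integral inverse C * Gamma a) UNIV"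
    by (metis has_integral_restrict_UNIV)
  have nn: "0 \<le> nakagami_density m \<Omega> x * x ^ k" for x
    using nak_density_nonneg[OF m Om, of x] by (cases "x > 0") (auto simp: nak_density_zero)
  have "(\<integral>\<^sup>+x. ennreal (nakagami_density m \<Omega> x * x ^ k) * indicator UNIV x \<partial>lborel) = ennreal (inverse C * Gamma a)"
    by (rule nn_integral_has_integral_lebesgue'[OF _ h2]) (use nn in auto)
  hence "has_bochner_integral lborel (\<lambda>x. nakagami_density m \<Omega> x * x ^ k) (inverse C * Gamma a)"
    by (intro has_bochner_integral_nn_integral) (use nn C a Gamma_real_pos[OF a] in auto)
  moreover have "inverse C * Gamma a = Gamma (m + real k / 2) / Gamma m * (\<Omega> / m) powr (real k / 2)"
    proof -
      have "(m / \<Omega>) powr (real k / 2) * (\<Omega> / m) powr (real k / 2) = 1"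
        using m Om by (simp add: powr_mult[symmetric])
      hence "inverse C = (\<Omega> / m) powr (real k / 2) / Gamma m"
        unfolding C_def c_def by (rule aux_alg3)
      thus ?thesis by (simp add: a_def)
    qed
  ultimately show ?thesis by simp
qed

lemma nak_rv_moment:
  fixes X :: "'a \<Rightarrow> real" and k :: nat
  assumes P: "prob_space M" and nak: "nakagami m \<Omega> M X" and m: "m > 0" and Om: "\<Omega> > 0"
  shows "integrable M (\<lambda>\<omega>. X \<omega> ^ k)"
    and "prob_space.expectation M (\<lambda>\<omega>. X \<omega> ^ k) = Gamma (m + real k / 2) / Gamma m * (\<Omega> / m) powr (real k / 2)"
proof -
  have D: "distributed M lborel X (\<lambda>x. ennreal (nakagami_density m \<Omega> x))"
    using nak by (simp add: nakagami_def)
  have hb: "has_bochner_integral lborel (\<lambda>x. nakagami_density m \<Omega> x * x ^ k)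
           (Gamma (m + real k / 2) / Gamma m * (\<Omega> / m) powr (real k / 2))"
    by (rule nak_moment[OF m Om])
  have "integrable lborel (\<lambda>x. nakagami_density m \<Omega> x * x ^ k)"
    using hb by (simp add: has_bochner_integral_iff)
  thus "integrable M (\<lambda>\<omega>. X \<omega> ^ k)"
    using distributed_integrable[OF D, of "\<lambda>x. x ^ k"] nak_density_nonneg[OF m Om] by simp
  have "(\<integral>x. nakagami_density m \<Omega> x * x ^ k \<partial>lborel) = (\<integral>\<omega>. X \<omega> ^ k \<partial>M)"
    using distributed_integral[OF D, of "\<lambda>x. x ^ k"] nak_density_nonneg[OF m Om] by simp
  thus "prob_space.expectation M (\<lambda>\<omega>. X \<omega> ^ k) = Gamma (m + real k / 2) / Gamma m * (\<Omega> / m) powr (real k / 2)"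
    using hb by (simp add: has_bochner_integral_iff)
qed

lemma nak_rv_meas:
  assumes "nakagami m \<Omega> M X"
  shows "X \<in> borel_measurable M"
  using assms unfolding nakagami_def by (auto dest: distributed_measurable)

lemma nak_mean_pos:
  assumes m: "m > 0" and Om: "\<Omega> > 0"
  shows "Gamma (m + real 1 / 2) / Gamma m * (\<Omega> / m) powr (real 1 / 2) > 0"
  using m Om by (intro mult_pos_pos divide_pos_pos Gamma_real_pos) auto

lemma nak_second:
  assumes m: "m > 0" and Om: "\<Omega> > 0"
  shows "Gamma (m + real 2 / 2) / Gamma m * (\<Omega> / m) powr (real 2 / 2) = \<Omega>"
proof -
  have "m \<notin> \<int>\<^sub>\<le>\<^sub>0" using m by (auto elim!: nonpos_Ints_cases)
  hence "Gamma (m + 1) = m * Gamma m" by (rule Gamma_plus1)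
  moreover have "Gamma m \<noteq> 0" using Gamma_real_pos[OF m] by simp
  ultimately show ?thesis using m Om by simp
qed

lemma nak_var_pos:
  fixes X :: "'a \<Rightarrow> real"
  assumes P: "prob_space M" and nak: "nakagami m \<Omega> M X" and m: "m > 0" and Om: "\<Omega> > 0"
  shows "prob_space.expectation M (\<lambda>\<omega>. (X \<omega>)^2) - (prob_space.expectation M X)^2 > 0"
proof -
  interpret prob_space M by fact
  have D: "distributed M lborel X (\<lambda>x. ennreal (nakagami_density m \<Omega> x))"
    using nak by (simp add: nakagami_def)
  have Xm[measurable]: "X \<in> borel_measurable M" by (rule nak_rv_meas[OF nak])
  have i1: "integrable M X" using nak_rv_moment(1)[OF P nak m Om, of 1] by simp
  have i2: "integrable M (\<lambda>\<omega>. (X \<omega>)^2)" using nak_rv_moment(1)[OF P nak m Om, of 2] by simp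
  define \<mu> where "\<mu> = expectation X"
  have ve: "variance X = expectation (\<lambda>\<omega>. (X \<omega>)^2) - (expectation X)^2"
    by (rule variance_eq[OF i1 i2])
  have "variance X \<ge> 0" by simp
  moreover have "variance X \<noteq> 0"
  proof
    assume v0: "variance X = 0"
    have iv: "integrable M (\<lambda>\<omega>. (X \<omega> - \<mu>)^2)"
      using i1 i2 by (simp add: power2_diff)
    have "AE \<omega> in M. (X \<omega> - \<mu>)^2 = 0"
      using integral_nonneg_eq_0_iff_AE[OF iv] v0 by (simp add: \<mu>_def)
    hence ae1: "AE \<omega> in M. X \<omega> = \<mu>" by simp
    have "emeasure M (X -` {\<mu>} \<inter> space M) = (\<integral>\<^sup>+x. ennreal (nakagami_density m \<Omega> x) * indicator {\<mu>} x \<partial>lborel)"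
      by (rule distributed_emeasure[OF D]) simp
    also have "\<dots> = 0"
      by (rule nn_integral_null_set) (simp add: countable_imp_null_set_lborel)
    finally have e0: "emeasure M (X -` {\<mu>} \<inter> space M) = 0" .
    have "AE \<omega> in M. X \<omega> \<noteq> \<mu>"
      by (rule AE_I'[of "X -` {\<mu>} \<inter> space M"]) (use e0 in \<open>auto intro!: null_setsI\<close>)
    with ae1 have "AE \<omega> in M. False" by eventually_elim simp
    thus False by simp
  qed
  ultimately show ?thesis using ve by simp
qed

lemma (in prob_space) indep_pair:
  assumes ind: "indep_vars (\<lambda>_. borel) X I" and "i \<in> I" "j \<in> I" "i \<noteq> j"
  shows "indep_var borel (X i) borel (X j)"
proof -
  have "indep_var
    borel ((\<lambda>f. f i) \<circ> (\<lambda>\<omega>. restrict (\<lambda>i. X i \<omega>) {i}))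
    borel ((\<lambda>f. f j) \<circ> (\<lambda>\<omega>. restrict (\<lambda>i. X i \<omega>) {j}))"
    using assms by (intro indep_var_compose[OF indep_var_restrict[OF ind]]) auto
  also have "((\<lambda>f. f i) \<circ> (\<lambda>\<omega>. restrict (\<lambda>i. X i \<omega>) {i})) = X i"
    by auto
  also have "((\<lambda>f. f j) \<circ> (\<lambda>\<omega>. restrict (\<lambda>i. X i \<omega>) {j})) = X j"
    by auto
  finally show ?thesis .
qed

lemma (in prob_space) indep_var_sq:
  assumes "indep_var borel (X :: 'a \<Rightarrow> real) borel Y"
  shows "indep_var borel (\<lambda>\<omega>. (X \<omega>)^2) borel (\<lambda>\<omega>. (Y \<omega>)^2)"
  using indep_var_compose[OF assms, of "\<lambda>x. x^2" borel "\<lambda>x. x^2" borel] by (simp add: comp_def)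

lemma (in prob_space) sum_sq:
  fixes Z :: "'i \<Rightarrow> 'a \<Rightarrow> real"
  assumes ind: "indep_vars (\<lambda>_. borel) Z I" and fin: "finite J" and JI: "J \<subseteq> I"
    and int: "\<And>j. j \<in> J \<Longrightarrow> integrable M (Z j) \<and> integrable M (\<lambda>\<omega>. (Z j \<omega>)^2)"
  shows "integrable M (\<lambda>\<omega>. \<Sum>j\<in>J. Z j \<omega>) \<and> integrable M (\<lambda>\<omega>. (\<Sum>j\<in>J. Z j \<omega>)^2) \<and>
    expectation (\<lambda>\<omega>. (\<Sum>j\<in>J. Z j \<omega>)^2) =
      (\<Sum>j\<in>J. expectation (Z j))^2 + (\<Sum>j\<in>J. expectation (\<lambda>\<omega>. (Z j \<omega>)^2) - (expectation (Z j))^2)"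
  using fin JI int
proof (induction J rule: finite_induct)
  case empty
  then show ?case by simp
next
  case (insert i J)
  let ?S = "\<lambda>\<omega>. \<Sum>j\<in>J. Z j \<omega>"
  have IH: "integrable M ?S" "integrable M (\<lambda>\<omega>. (?S \<omega>)^2)"
    "expectation (\<lambda>\<omega>. (?S \<omega>)^2) =
      (\<Sum>j\<in>J. expectation (Z j))^2 + (\<Sum>j\<in>J. expectation (\<lambda>\<omega>. (Z j \<omega>)^2) - (expectation (Z j))^2)"
    using insert by auto
  have iZ: "integrable M (Z i)" "integrable M (\<lambda>\<omega>. (Z i \<omega>)^2)" using insert by auto
  have iv: "indep_var borel (Z i) borel ?S"
    by (rule indep_vars_sum[OF insert(1,2) indep_vars_subset[OF ind]]) (use insert in auto)
  have iprod: "integrable M (\<lambda>\<omega>. Z i \<omega> * ?S \<omega>)"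
    by (rule indep_var_integrable[OF iv iZ(1) IH(1)])
  have eprod: "expectation (\<lambda>\<omega>. Z i \<omega> * ?S \<omega>) = expectation (Z i) * expectation ?S"
    by (rule indep_var_lebesgue_integral[OF iv iZ(1) IH(1)])
  have eS: "expectation ?S = (\<Sum>j\<in>J. expectation (Z j))"
    by (rule Bochner_Integration.integral_sum) (use insert in auto)
  have sq: "(\<lambda>\<omega>. (\<Sum>j\<in>insert i J. Z j \<omega>)^2) = (\<lambda>\<omega>. (Z i \<omega>)^2 + 2 * (Z i \<omega> * ?S \<omega>) + (?S \<omega>)^2)"
    using insert by (simp add: power2_sum algebra_simps)
  have i3: "integrable M (\<lambda>\<omega>. (Z i \<omega>)^2 + 2 * (Z i \<omega> * ?S \<omega>) + (?S \<omega>)^2)"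
    using iZ iprod IH by auto
  have "expectation (\<lambda>\<omega>. (Z i \<omega>)^2 + 2 * (Z i \<omega> * ?S \<omega>) + (?S \<omega>)^2) =
      expectation (\<lambda>\<omega>. (Z i \<omega>)^2) + 2 * expectation (\<lambda>\<omega>. Z i \<omega> * ?S \<omega>) + expectation (\<lambda>\<omega>. (?S \<omega>)^2)"
    using iZ iprod IH by simp
  also have "\<dots> = (\<Sum>j\<in>insert i J. expectation (Z j))^2 +
      (\<Sum>j\<in>insert i J. expectation (\<lambda>\<omega>. (Z j \<omega>)^2) - (expectation (Z j))^2)"
    unfolding eprod eS IH(3) using insert by (simp add: power2_sum algebra_simps)
  finally show ?case
    using sq i3 Bochner_Integration.integrable_sum[of "insert i J" M "\<lambda>j \<omega>. Z j \<omega>"] insert by auto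
qed

definition Kset :: "nat \<Rightarrow> rv_idx set" where
  "Kset j = (case j of 0 \<Rightarrow> {U} | Suc 0 \<Rightarrow> {Fi} | Suc (Suc n) \<Rightarrow> {Gi (Suc n), Hi (Suc n)})"

definition Yfun :: "real \<Rightarrow> nat \<Rightarrow> (rv_idx \<Rightarrow> real) \<Rightarrow> real" where
  "Yfun \<eta> j f = (case j of 0 \<Rightarrow> f U | Suc 0 \<Rightarrow> f Fi | Suc (Suc n) \<Rightarrow> \<eta> * f (Gi (Suc n)) * f (Hi (Suc n)))"

lemma Kset_disj: "disjoint_family_on Kset UNIV"
  unfolding disjoint_family_on_def Kset_def by (auto split: nat.splits)

lemma Yfun_meas: "Yfun \<eta> j \<in> borel_measurable (PiM (Kset j) (\<lambda>_. borel))"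
proof (cases j)
  case 0
  have "Yfun \<eta> j = (\<lambda>f. f U)" "Kset j = {U}" using 0 by (auto simp: Yfun_def Kset_def)
  then show ?thesis by simp
next
  case (Suc n) then show ?thesis
  proof (cases n)
    case 0
    have "Yfun \<eta> j = (\<lambda>f. f Fi)" "Kset j = {Fi}" using 0 Suc by (auto simp: Yfun_def Kset_def)
    then show ?thesis by simp
  next
    case (Suc n')
    have "Yfun \<eta> j = (\<lambda>f. \<eta> * f (Gi (Suc n')) * f (Hi (Suc n')))" "Kset j = {Gi (Suc n'), Hi (Suc n')}"
      using Suc \<open>j = Suc n\<close> by (auto simp: Yfun_def Kset_def)
    then show ?thesis by simp
  qed
qed

lemma Yfun_restrict: "Yfun \<eta> j (restrict f (Kset j)) = Yfun \<eta> j f"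
  by (auto simp: Yfun_def Kset_def split: nat.splits)

lemma (in prob_space) indep_Z:
  assumes "indep_vars (\<lambda>_. (borel :: real measure)) X UNIV"
  shows "indep_vars (\<lambda>_. borel) (\<lambda>j \<omega>. Yfun \<eta> j (\<lambda>i. X i \<omega>)) UNIV"
proof -
  have "indep_vars (\<lambda>j. PiM (Kset j) (\<lambda>_. borel)) (\<lambda>j \<omega>. restrict (\<lambda>i. X i \<omega>) (Kset j)) UNIV"
    by (rule indep_vars_restrict[OF assms _ Kset_disj]) auto
  hence "indep_vars (\<lambda>_. borel) (\<lambda>j \<omega>. Yfun \<eta> j (restrict (\<lambda>i. X i \<omega>) (Kset j))) UNIV"
    by (rule indep_vars_compose2) (rule Yfun_meas)
  thus ?thesis by (simp add: Yfun_restrict)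
qed

lemma aux_div1: "(n::real) \<noteq> 0 \<Longrightarrow> inverse n * ((X / n) / (Y / n)^2) = X / Y^2"
  by (cases "Y = 0") (simp_all add: field_simps power2_eq_square)

lemma aux_div2:
  fixes A mu Om w :: real
  assumes "A \<noteq> 0"
  shows "(mu * A)^2 / (Om * (A^2 + w) - (mu * A)^2) = mu^2 / (Om * (1 + w / A^2) - mu^2)"
proof -
  have "Om * (1 + w / A^2) - mu^2 = (Om * (A^2 + w) - (mu * A)^2) / A^2"
    using assms by (simp add: field_simps power_mult_distrib)
  thus ?thesis using assms by (simp add: power_mult_distrib)
qed

lemma lim_ratio_zero:
  fixes a c v d :: real
  assumes a: "a > 0"
  shows "(\<lambda>N. (v + real N * d) / (c + real N * a)^2) \<longlonglongrightarrow> 0"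
proof -
  have "(\<lambda>N. inverse (real N) * ((v / real N + d) / (c / real N + a)^2)) \<longlonglongrightarrow> 0 * ((0 + d) / (0 + a)^2)"
    by (intro tendsto_intros lim_inverse_n lim_const_over_n) (use a in auto)
  hence L: "(\<lambda>N. inverse (real N) * ((v / real N + d) / (c / real N + a)^2)) \<longlonglongrightarrow> 0" by simp
  have ev: "\<forall>\<^sub>F N in sequentially. inverse (real N) * ((v / real N + d) / (c / real N + a)^2) =
              (v + real N * d) / (c + real N * a)^2"
  proof (rule eventually_sequentiallyI[of 1])
    fix N :: nat assume "1 \<le> N"
    hence N: "real N > 0" by simp
    have "v / real N + d = (v + real N * d) / real N" using N by (simp add: field_simps)
    moreover have "c / real N + a = (c + real N * a) / real N" using N by (simp add: field_simps)
    ultimately show "inverse (real N) * ((v / real N + d) / (c / real N + a)^2) =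
              (v + real N * d) / (c + real N * a)^2"
      using N aux_div1[of "real N" "v + real N * d" "c + real N * a"] by simp
  qed
  show ?thesis by (rule Lim_transform_eventually[OF L ev])
qed

lemma lim_main:
  fixes mu Om a c v d :: real
  assumes mu: "mu > 0" and gap: "Om - mu^2 > 0" and a: "a > 0" and c: "c > 0"
  shows "(\<lambda>N. (mu * (c + real N * a))^2 / (Om * ((c + real N * a)^2 + (v + real N * d)) - (mu * (c + real N * a))^2) / 2)
           \<longlonglongrightarrow> mu^2 / (Om - mu^2) / 2"
proof -
  define r where "r N = (v + real N * d) / (c + real N * a)^2" for N
  have r: "r \<longlonglongrightarrow> 0" unfolding r_def by (rule lim_ratio_zero[OF a])
  have "(\<lambda>N. mu^2 / (Om * (1 + r N) - mu^2) / 2) \<longlonglongrightarrow> mu^2 / (Om * (1 + 0) - mu^2) / 2"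
    by (intro tendsto_intros r) (use gap in auto)
  moreover have "mu^2 / (Om * (1 + r N) - mu^2) / 2 =
     (mu * (c + real N * a))^2 / (Om * ((c + real N * a)^2 + (v + real N * d)) - (mu * (c + real N * a))^2) / 2" for N
  proof -
    have A: "c + real N * a > 0" using a c by (simp add: add_pos_nonneg)
    define A where "A = c + real N * a"
    have "A^2 > 0" using \<open>c + real N * a > 0\<close> by (simp add: A_def)
    have "(mu * A)^2 / (Om * (A^2 + (v + real N * d)) - (mu * A)^2) = mu^2 / (Om * (1 + r N) - mu^2)"
      unfolding r_def A_def[symmetric] using \<open>A^2 > 0\<close> by (intro aux_div2) simp
    thus ?thesis by (simp add: A_def)
  qed
  ultimately show ?thesis by simp
qed

definition nak_mean :: "real \<Rightarrow> real \<Rightarrow> real" where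
  "nak_mean m \<Omega> = Gamma (m + 1/2) / Gamma m * (\<Omega> / m) powr (1/2)"

lemma nak_facts:
  fixes Y :: "'a \<Rightarrow> real"
  assumes P: "prob_space M" and nak: "nakagami m \<Omega> M Y" and m: "m \<ge> 1/2" and Om: "\<Omega> > 0"
  shows "integrable M Y" "integrable M (\<lambda>\<omega>. (Y \<omega>)^2)"
    "prob_space.expectation M Y = nak_mean m \<Omega>"
    "prob_space.expectation M (\<lambda>\<omega>. (Y \<omega>)^2) = \<Omega>"
    "nak_mean m \<Omega> > 0" "\<Omega> - (nak_mean m \<Omega>)^2 > 0"
proof -
  have m0: "m > 0" using m by simp
  show i1: "integrable M Y" using nak_rv_moment(1)[OF P nak m0 Om, of 1] by simp
  show "integrable M (\<lambda>\<omega>. (Y \<omega>)^2)" using nak_rv_moment(1)[OF P nak m0 Om, of 2] by simp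
  show e1: "prob_space.expectation M Y = nak_mean m \<Omega>"
    using nak_rv_moment(2)[OF P nak m0 Om, of 1] by (simp add: nak_mean_def)
  show e2: "prob_space.expectation M (\<lambda>\<omega>. (Y \<omega>)^2) = \<Omega>"
    using nak_rv_moment(2)[OF P nak m0 Om, of 2] nak_second[OF m0 Om] by simp
  show "nak_mean m \<Omega> > 0" using nak_mean_pos[OF m0 Om] by (simp add: nak_mean_def)
  show "\<Omega> - (nak_mean m \<Omega>)^2 > 0" using nak_var_pos[OF P nak m0 Om] e1 e2 by simp
qed

lemma final_alg:
  fixes g g' m \<Omega> p :: real
  assumes "g > 0" "g' > 0" "m > 0" "\<Omega> > 0" "p^2 = \<Omega> / m"
  shows "(g' / g * p)^2 / (\<Omega> - (g' / g * p)^2) / 2 = (1/2) * inverse (m * (g / g')^2 - 1)"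
proof -
  define q where "q = p^2"
  have q: "q > 0" using assms by (simp add: q_def)
  have "(g' / g * p)^2 = g'^2 / g^2 * q" by (simp add: q_def power_mult_distrib power_divide)
  moreover have "\<Omega> = m * q" using assms by (simp add: q_def)
  ultimately have "(g' / g * p)^2 / (\<Omega> - (g' / g * p)^2) = (g'^2 / g^2 * q) / ((m - g'^2 / g^2) * q)"
    by (simp add: algebra_simps)
  also have "\<dots> = (g'^2 / g^2) / (m - g'^2 / g^2)" using q by simp
  also have "\<dots> = inverse (m * (g / g')^2 - 1)"
    using assms by (simp add: field_simps power_divide)
  finally show ?thesis by simp
qed

lemma nak_mean_sq: "(m::real) > 0 \<Longrightarrow> \<Omega> > 0 \<Longrightarrow> ((\<Omega> / m) powr (1/2))^2 = \<Omega> / m"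
  by (simp add: powr_half_sqrt)

lemma sum_split1: "(\<Sum>j\<in>{1..Suc N}. f j) = f (1::nat) + (\<Sum>n\<in>{1..N}. f (Suc n))"
proof -
  have "sum f {1..Suc N} = f 1 + sum f {Suc 1..Suc N}" by (rule sum.atLeast_Suc_atMost) simp
  also have "sum f {Suc 1..Suc N} = sum (\<lambda>i. f (Suc i)) {1..N}" by (rule sum.shift_bounds_cl_Suc_ivl)
  finally show ?thesis .
qed

theorem mainTheorem8:
  fixes M :: "'a measure" and X :: "rv_idx \<Rightarrow> 'a \<Rightarrow> real"
    and m_u \<Omega>_u m_f \<Omega>_f m_g \<Omega>_g m_h \<Omega>_h \<eta> :: real
  assumes "prob_space M"
    and "prob_space.indep_vars M (\<lambda>_. (borel :: real measure)) X UNIV"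
    and "m_u \<ge> 1/2" "\<Omega>_u > 0" "m_f \<ge> 1/2" "\<Omega>_f > 0"
    and "m_g \<ge> 1/2" "\<Omega>_g > 0" "m_h \<ge> 1/2" "\<Omega>_h > 0"
    and "nakagami m_u \<Omega>_u M (X U)"
    and "nakagami m_f \<Omega>_f M (X Fi)"
    and "\<And>n. n \<ge> 1 \<Longrightarrow> nakagami m_g \<Omega>_g M (X (Gi n))"
    and "\<And>n. n \<ge> 1 \<Longrightarrow> nakagami m_h \<Omega>_h M (X (Hi n))"
    and "0 < \<eta>" "\<eta> \<le> 1"
  shows "(\<lambda>N. G_d M X \<eta> N) \<longlonglongrightarrow>
           (1/2) * inverse (m_u * (Gamma m_u / Gamma (m_u + 1/2))\<^sup>2 - 1)"
proof -
  note PS = assms(1)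
  interpret P: prob_space M by (rule PS)
  note ind = assms(2)
  define Z where "Z j \<omega> = Yfun \<eta> j (\<lambda>i. X i \<omega>)" for j \<omega>
  have indZ: "P.indep_vars (\<lambda>_. borel) Z UNIV"
    unfolding Z_def[abs_def] by (rule P.indep_Z[OF ind])
  have Z0: "Z 0 = X U" and Z1: "Z (Suc 0) = X Fi" by (auto simp: Z_def Yfun_def fun_eq_iff)
  have ZS: "Z (Suc n) = (\<lambda>\<omega>. \<eta> * (X (Gi n) \<omega> * X (Hi n) \<omega>))" if "n \<ge> 1" for n
    using that by (cases n) (auto simp: Z_def Yfun_def fun_eq_iff)
  note U = nak_facts[OF PS assms(11) assms(3) assms(4)]
  note F = nak_facts[OF PS assms(12) assms(5) assms(6)]
  define \<mu>u where "\<mu>u = nak_mean m_u \<Omega>_u"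
  define \<mu>f where "\<mu>f = nak_mean m_f \<Omega>_f"
  define a where "a = \<eta> * (nak_mean m_g \<Omega>_g * nak_mean m_h \<Omega>_h)"
  define b where "b = \<eta>^2 * (\<Omega>_g * \<Omega>_h)"
  define vF where "vF = \<Omega>_f - \<mu>f^2"
  have apos: "a > 0"
    using nak_facts(5)[OF PS assms(13)[of 1] assms(7,8)] nak_facts(5)[OF PS assms(14)[of 1] assms(9,10)] assms(15)
    by (simp add: a_def)
  have Zn: "integrable M (Z (Suc n)) \<and> integrable M (\<lambda>\<omega>. (Z (Suc n) \<omega>)^2) \<and>
      P.expectation (Z (Suc n)) = a \<and> P.expectation (\<lambda>\<omega>. (Z (Suc n) \<omega>)^2) = b" if n: "n \<ge> 1" for n
  proof -
    note G = nak_facts[OF PS assms(13)[OF n] assms(7,8)]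
    note H = nak_facts[OF PS assms(14)[OF n] assms(9,10)]
    have iv: "P.indep_var borel (X (Gi n)) borel (X (Hi n))"
      by (rule P.indep_pair[OF ind]) auto
    have iv2: "P.indep_var borel (\<lambda>\<omega>. (X (Gi n) \<omega>)^2) borel (\<lambda>\<omega>. (X (Hi n) \<omega>)^2)"
      by (rule P.indep_var_sq[OF iv])
    have i1: "integrable M (\<lambda>\<omega>. X (Gi n) \<omega> * X (Hi n) \<omega>)"
      by (rule P.indep_var_integrable[OF iv G(1) H(1)])
    have e1: "P.expectation (\<lambda>\<omega>. X (Gi n) \<omega> * X (Hi n) \<omega>) = nak_mean m_g \<Omega>_g * nak_mean m_h \<Omega>_h"
      using P.indep_var_lebesgue_integral[OF iv G(1) H(1)] G(3) H(3) by simp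
    have i2: "integrable M (\<lambda>\<omega>. (X (Gi n) \<omega>)^2 * (X (Hi n) \<omega>)^2)"
      by (rule P.indep_var_integrable[OF iv2 G(2) H(2)])
    have e2: "P.expectation (\<lambda>\<omega>. (X (Gi n) \<omega>)^2 * (X (Hi n) \<omega>)^2) = \<Omega>_g * \<Omega>_h"
      using P.indep_var_lebesgue_integral[OF iv2 G(2) H(2)] G(4) H(4) by simp
    have sq: "(\<lambda>\<omega>. (\<eta> * (X (Gi n) \<omega> * X (Hi n) \<omega>))^2) = (\<lambda>\<omega>. \<eta>^2 * ((X (Gi n) \<omega>)^2 * (X (Hi n) \<omega>)^2))"
      by (simp add: power_mult_distrib)
    show ?thesis
      unfolding ZS[OF n] sq using i1 i2 e1 e2 by (simp add: a_def b_def)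
  qed
  have Zint: "integrable M (Z j) \<and> integrable M (\<lambda>\<omega>. (Z j \<omega>)^2)" if "j \<in> {1..Suc N}" for j N
  proof (cases "j = 1")
    case True then show ?thesis using F(1,2) Z1 by simp
  next
    case False
    with that obtain n where "j = Suc n" "n \<ge> 1" by (cases j) auto
    then show ?thesis using Zn by simp
  qed
  have GdN: "G_d M X \<eta> N = (\<mu>u * (\<mu>f + real N * a))^2 /
      (\<Omega>_u * ((\<mu>f + real N * a)^2 + (vF + real N * (b - a^2))) - (\<mu>u * (\<mu>f + real N * a))^2) / 2" for N
  proof -
    define J where "J = {1..Suc N}"
    define S where "S \<omega> = (\<Sum>j\<in>J. Z j \<omega>)" for \<omega>
    have JI: "finite J" "0 \<notin> J" by (auto simp: J_def)
    have SS: "integrable M S \<and> integrable M (\<lambda>\<omega>. (S \<omega>)^2) \<and>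
      P.expectation (\<lambda>\<omega>. (S \<omega>)^2) =
      (\<Sum>j\<in>J. P.expectation (Z j))^2 + (\<Sum>j\<in>J. P.expectation (\<lambda>\<omega>. (Z j \<omega>)^2) - (P.expectation (Z j))^2)"
      unfolding S_def by (rule P.sum_sq[OF indZ JI(1)]) (use Zint in \<open>auto simp: J_def\<close>)
    have eS1: "(\<Sum>j\<in>J. P.expectation (Z j)) = \<mu>f + real N * a"
      unfolding J_def sum_split1 using Zn F(3) Z1 by (simp add: \<mu>f_def)
    have eS2: "(\<Sum>j\<in>J. P.expectation (\<lambda>\<omega>. (Z j \<omega>)^2) - (P.expectation (Z j))^2) = vF + real N * (b - a^2)"
      unfolding J_def sum_split1 using Zn F(3,4) Z1 by (simp add: vF_def \<mu>f_def)
    have eS: "P.expectation S = \<mu>f + real N * a"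
      unfolding S_def using Zint eS1 by (subst Bochner_Integration.integral_sum) (auto simp: J_def)
    have Lam: "Lambda X \<eta> N = (\<lambda>\<omega>. Z 0 \<omega> * S \<omega>)"
    proof
      fix \<omega>
      have "(\<Sum>n\<in>{1..N}. \<eta> * X (Gi n) \<omega> * X (Hi n) \<omega>) = (\<Sum>n\<in>{1..N}. Z (Suc n) \<omega>)"
        by (rule sum.cong) (auto simp: ZS)
      thus "Lambda X \<eta> N \<omega> = Z 0 \<omega> * S \<omega>"
        unfolding Lambda_def S_def J_def sum_split1 using Z0 Z1 by simp
    qed
    have iv: "P.indep_var borel (Z 0) borel S"
      unfolding S_def by (rule P.indep_vars_sum[OF JI P.indep_vars_subset[OF indZ]]) auto
    have iL: "integrable M (Lambda X \<eta> N)"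
      unfolding Lam by (rule P.indep_var_integrable[OF iv]) (use U Z0 SS in auto)
    have eL: "P.expectation (Lambda X \<eta> N) = \<mu>u * (\<mu>f + real N * a)"
      unfolding Lam using P.indep_var_lebesgue_integral[OF iv] U Z0 SS eS by (simp add: \<mu>u_def)
    have iv2: "P.indep_var borel (\<lambda>\<omega>. (Z 0 \<omega>)^2) borel (\<lambda>\<omega>. (S \<omega>)^2)"
      by (rule P.indep_var_sq[OF iv])
    have sqL: "(\<lambda>\<omega>. (Lambda X \<eta> N \<omega>)^2) = (\<lambda>\<omega>. (Z 0 \<omega>)^2 * (S \<omega>)^2)"
      unfolding Lam by (simp add: power_mult_distrib)
    have iL2: "integrable M (\<lambda>\<omega>. (Lambda X \<eta> N \<omega>)^2)"
      unfolding sqL by (rule P.indep_var_integrable[OF iv2]) (use U Z0 SS in auto)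
    have eL2: "P.expectation (\<lambda>\<omega>. (Lambda X \<eta> N \<omega>)^2) =
        \<Omega>_u * ((\<mu>f + real N * a)^2 + (vF + real N * (b - a^2)))"
      unfolding sqL using P.indep_var_lebesgue_integral[OF iv2] U Z0 SS eS1 eS2 by simp
    have var: "P.variance (Lambda X \<eta> N) =
        \<Omega>_u * ((\<mu>f + real N * a)^2 + (vF + real N * (b - a^2))) - (\<mu>u * (\<mu>f + real N * a))^2"
      using P.variance_eq[OF iL iL2] eL eL2 by simp
    show ?thesis unfolding G_d_def k_Lambda_def unfolding var unfolding eL by simp
  qed
  have lim: "(\<lambda>N. G_d M X \<eta> N) \<longlonglongrightarrow> \<mu>u^2 / (\<Omega>_u - \<mu>u^2) / 2"
    unfolding GdN
    by (rule lim_main) (use U F apos in \<open>auto simp: \<mu>u_def \<mu>f_def\<close>)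
  have m0: "m_u > 0" using assms(3) by simp
  have eq: "\<mu>u^2 / (\<Omega>_u - \<mu>u^2) / 2 = (1/2) * inverse (m_u * (Gamma m_u / Gamma (m_u + 1/2))\<^sup>2 - 1)"
    unfolding \<mu>u_def nak_mean_def
    by (rule final_alg) (use m0 assms(4) nak_mean_sq[OF m0 assms(4)] in \<open>auto intro: Gamma_real_pos\<close>)
  show ?thesis using lim unfolding eq .
qed

end
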